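(* Let $X$ be a ballean whose hypersymmetric square $[X]^{\le2}$ is normal. Then (1) $X$ has bounded growth, and (2) either $X$ is ultranormal or the bornology $\mathcal B_X$ of $X$ has a linearly ordered base.
   Context: A ballean is a pair $(X,\mathcal E_X)$ where $X$ is a set and $\mathcal E_X$ is a family of subsets of $X\times X$ (entourages) such that: each $E\in\mathcal E_X$ contains the diagonal $\Delta_X$; for any $E,F\in\mathcal E_X$ there is $D\in\mathcal E_X$ with $E\circ F^{-1}\subset D$; and $\bigcup\mathcal E_X=X\times X$. For $E\subset X\times X$, $x\in X$, $A\subset X$: $E[x]=\{y:(x,y)\in E\}$, $E[A]=\bigcup_{a\in A}E[a]$. $B\subset X$ is bounded if $B\subset E[x]$ for some $E\in\mathcal E_X$, $x\in X$; $\mathcal B_X$ is the family of bounded sets. Sets $A,B$ are asymptotically disjoint if $E[A]\cap E[B]\in\mathcal B_X$ for all $E\in\mathcal E_X$; $U$ is an asymptotic neighborhood of $A$ if $E[A]\setminus U\in\mathcal B_X$ for all $E$; $X$ is normal if any two asymptotically disjoint sets have disjoint asymptotic neighborhoods, and ultranormal if it contains no two unbounded asymptotically disjoint sets. The hyperballean $[X]^{\mathcal B}$ is $\mathcal B_X\setminus\{\emptyset\}$ with entourages $\hat E=\{(A,B):A\subset E[B],\ B\subset E[A]\}$, $E\in\mathcal E_X$; $[X]^{\le 2}$ is its subballean $\{A:|A|\le2\}$ (entourages restricted to it). A linearly ordered base of $\mathcal B_X$ is a subfamily linearly ordered by inclusion such that every bounded set is contained in a member. $X$ has bounded growth if there is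 $G\subset X\times X$ with $G[B]$ bounded for all bounded $B$, and for each $E\in\mathcal E_X$ a bounded $B$ with $E[x]\subset G[x]$ for all $x\in X\setminus B$. *)

theory Defs
  imports Main
begin

definition ballean :: "'a set \<Rightarrow> ('a \<times> 'a) set set \<Rightarrow> bool" where
  "ballean X EE \<longleftrightarrow>
     (\<forall>E\<in>EE. E \<subseteq> X \<times> X \<and> Id_on X \<subseteq> E) \<and>
     (\<forall>E\<in>EE. \<forall>F\<in>EE. \<exists>D\<in>EE. E O F\<inverse> \<subseteq> D) \<and>
     \<Union>EE = X \<times> X"

definition bounded_set :: "'a set \<Rightarrow> ('a \<times> 'a) set set \<Rightarrow> 'a set \<Rightarrow> bool" where
  "bounded_set X EE B \<longleftrightarrow> (\<exists>E\<in>EE. \<exists>x\<in>X. B \<subseteq> E `` {x})"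

definition asymp_disjoint :: "'a set \<Rightarrow> ('a \<times> 'a) set set \<Rightarrow> 'a set \<Rightarrow> 'a set \<Rightarrow> bool" where
  "asymp_disjoint X EE A B \<longleftrightarrow> (\<forall>E\<in>EE. bounded_set X EE (E `` A \<inter> E `` B))"

definition asymp_nbhd :: "'a set \<Rightarrow> ('a \<times> 'a) set set \<Rightarrow> 'a set \<Rightarrow> 'a set \<Rightarrow> bool" where
  "asymp_nbhd X EE U A \<longleftrightarrow> (\<forall>E\<in>EE. bounded_set X EE (E `` A - U))"

definition normal_ballean :: "'a set \<Rightarrow> ('a \<times> 'a) set set \<Rightarrow> bool" where
  "normal_ballean X EE \<longleftrightarrow>
     (\<forall>A B. A \<subseteq> X \<longrightarrow> B \<subseteq> X \<longrightarrow> asymp_disjoint X EE A B \<longrightarrow>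
        (\<exists>U V. U \<subseteq> X \<and> V \<subseteq> X \<and> asymp_nbhd X EE U A \<and> asymp_nbhd X EE V B \<and> U \<inter> V = {}))"

definition ultranormal :: "'a set \<Rightarrow> ('a \<times> 'a) set set \<Rightarrow> bool" where
  "ultranormal X EE \<longleftrightarrow>
     \<not> (\<exists>A B. A \<subseteq> X \<and> B \<subseteq> X \<and> \<not> bounded_set X EE A \<and> \<not> bounded_set X EE B
            \<and> asymp_disjoint X EE A B)"

text \<open>The hypersymmetric square [X]^{<=2}: nonempty bounded subsets with at most two elements,
  with the restrictions of the hyperballean entourages \<open>\<hat>E\<close>.\<close>

definition hyp2_carrier :: "'a set \<Rightarrow> ('a \<times> 'a) set set \<Rightarrow> 'a set set" where
  "hyp2_carrier X EE = {A. A \<noteq> {} \<and> bounded_set X EE A \<and> finite A \<and> card A \<le> 2}"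

definition hyp_entourage :: "'a set \<Rightarrow> ('a \<times> 'a) set set \<Rightarrow> ('a \<times> 'a) set \<Rightarrow> ('a set \<times> 'a set) set" where
  "hyp_entourage X EE E =
     {(A, B). A \<in> hyp2_carrier X EE \<and> B \<in> hyp2_carrier X EE \<and> A \<subseteq> E `` B \<and> B \<subseteq> E `` A}"

definition hyp2_entourages :: "'a set \<Rightarrow> ('a \<times> 'a) set set \<Rightarrow> ('a set \<times> 'a set) set set" where
  "hyp2_entourages X EE = hyp_entourage X EE ` EE"

definition bounded_growth :: "'a set \<Rightarrow> ('a \<times> 'a) set set \<Rightarrow> bool" where
  "bounded_growth X EE \<longleftrightarrow>
     (\<exists>G. G \<subseteq> X \<times> X \<and> (\<forall>B. bounded_set X EE B \<longrightarrow> bounded_set X EE (G `` B)) \<and>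
        (\<forall>E\<in>EE. \<exists>B. bounded_set X EE B \<and> (\<forall>x\<in>X - B. E `` {x} \<subseteq> G `` {x})))"

definition has_linear_bornology_base :: "'a set \<Rightarrow> ('a \<times> 'a) set set \<Rightarrow> bool" where
  "has_linear_bornology_base X EE \<longleftrightarrow>
     (\<exists>L. (\<forall>A\<in>L. bounded_set X EE A) \<and> (\<forall>A\<in>L. \<forall>B\<in>L. A \<subseteq> B \<or> B \<subseteq> A) \<and>
          (\<forall>B. bounded_set X EE B \<longrightarrow> (\<exists>A\<in>L. B \<subseteq> A)))"

end

theory Submission
  imports Defs
begin

definition cofam :: "('a set \<Rightarrow> bool) \<Rightarrow> 'a set set \<Rightarrow> bool" where
  "cofam bd C \<longleftrightarrow> (\<forall>A\<in>C. bd A) \<and> (\<forall>S. bd S \<longrightarrow> (\<exists>A\<in>C. S \<subseteq> A))"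

lemma min_cofam:
  assumes "cofam bd C0"
  shows "\<exists>C. cofam bd C \<and> (\<forall>C'. cofam bd C' \<longrightarrow> (card_of C, card_of C') \<in> ordLeq)"
proof -
  let ?R = "card_of ` {C. cofam bd C}"
  have ne: "?R \<noteq> {}" using assms by blast
  have wo: "\<forall>r\<in>?R. Well_order r" by (simp add: card_of_Well_order)
  obtain r where r: "r \<in> ?R" "\<forall>r'\<in>?R. (r, r') \<in> ordLeq"
    using exists_minim_Well_order[OF ne wo] by (elim bexE) simp
  then obtain C where "cofam bd C" "r = card_of C" by auto
  then show ?thesis using r(2) by auto
qed
lemma chain_lemma:
  assumes un: "\<And>S T. bd S \<Longrightarrow> bd T \<Longrightarrow> bd (S \<union> T)"
    and c0: "cofam bd C0"
    and small: "\<And>C F. cofam bd C \<Longrightarrow> (\<forall>C'. cofam bd C' \<longrightarrow> (card_of C, card_of C') \<in> ordLeq) \<Longrightarrow>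
        F \<subseteq> C \<Longrightarrow> (card_of F, card_of C) \<in> ordLess \<Longrightarrow> bd (\<Union>F)"
  shows "\<exists>L. (\<forall>A\<in>L. bd A) \<and> (\<forall>A\<in>L. \<forall>B\<in>L. A \<subseteq> B \<or> B \<subseteq> A) \<and>
          (\<forall>B. bd B \<longrightarrow> (\<exists>A\<in>L. B \<subseteq> A))"
proof -
  obtain C where C: "cofam bd C" and mn: "\<forall>C'. cofam bd C' \<longrightarrow> (card_of C, card_of C') \<in> ordLeq"
    using min_cofam[OF c0] by blast
  define r where "r = card_of C"
  have co: "Card_order r" unfolding r_def by (rule card_of_Card_order)
  have fr: "Field r = C" unfolding r_def by (rule Field_card_of)
  have wo: "Well_order r" using co unfolding card_order_on_def by simp
  have lin: "Linear_order r" using wo unfolding well_order_on_def by simp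
  have refl: "Refl r" and tr: "trans r" and tot: "Total r"
    using lin unfolding linear_order_on_def partial_order_on_def preorder_on_def by auto
  define L where "L = (\<lambda>c. \<Union>(under r c)) ` C"
  have und: "under r c = underS r c \<union> {c}" if "c \<in> C" for c
  proof -
    have "(c,c) \<in> r" using refl that fr by (simp add: refl_on_def)
    then show ?thesis unfolding under_def underS_def by auto
  qed
  have bdL: "bd (\<Union>(under r c))" if "c \<in> C" for c
  proof -
    have "underS r c \<subseteq> C" using fr unfolding underS_def Field_def by auto
    moreover have "(card_of (underS r c), card_of C) \<in> ordLess" using card_of_underS[OF co] that fr r_def by simp
    ultimately have "bd (\<Union>(underS r c))" using small[OF C mn] by blast
    moreover have "bd c" using C that unfolding cofam_def by blast
    ultimately show ?thesis using und[OF that] un by auto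
  qed
  have mono: "under r c \<subseteq> under r d" if "(c,d) \<in> r" for c d
    using tr that unfolding under_def trans_def by blast
  show ?thesis
  proof (rule exI[of _ L], intro conjI ballI allI impI)
    show "bd A" if "A \<in> L" for A using that bdL unfolding L_def by auto
  next
    fix A B assume "A \<in> L" "B \<in> L"
    then obtain c d where cd: "c \<in> C" "d \<in> C" "A = \<Union>(under r c)" "B = \<Union>(under r d)"
      unfolding L_def by auto
    have "c = d \<or> (c,d) \<in> r \<or> (d,c) \<in> r" using tot cd(1,2) fr unfolding total_on_def by metis
    then show "A \<subseteq> B \<or> B \<subseteq> A" using mono cd by blast
  next
    fix S assume "bd S"
    then obtain c where "c \<in> C" "S \<subseteq> c" using C unfolding cofam_def by blast
    moreover have "c \<in> under r c" using und[OF \<open>c\<in>C\<close>] by simp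
    ultimately show "\<exists>A\<in>L. S \<subseteq> A" unfolding L_def by blast
  qed
qed

lemma bl_D1: "ballean X EE \<Longrightarrow> \<forall>E\<in>EE. E \<subseteq> X \<times> X \<and> Id_on X \<subseteq> E"
  unfolding ballean_def by (elim conjE) assumption
lemma bl_D2: "ballean X EE \<Longrightarrow> \<forall>E\<in>EE. \<forall>F\<in>EE. \<exists>D\<in>EE. E O F\<inverse> \<subseteq> D"
  unfolding ballean_def by (elim conjE) assumption
lemma bl_D3: "ballean X EE \<Longrightarrow> \<Union>EE = X \<times> X"
  unfolding ballean_def by (elim conjE) assumption

lemma bl_sub: "ballean X EE \<Longrightarrow> E \<in> EE \<Longrightarrow> E \<subseteq> X \<times> X"
  using bl_D1 by blast

lemma bl_id: assumes "ballean X EE" "E \<in> EE" "x \<in> X" shows "(x,x) \<in> E"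
proof -
  have "Id_on X \<subseteq> E" using assms(1,2) bl_D1 by blast
  moreover have "(x,x) \<in> Id_on X" using assms(3) by (rule Id_onI)
  ultimately show ?thesis by blast
qed

lemma bl_comp0: "ballean X EE \<Longrightarrow> E \<in> EE \<Longrightarrow> F \<in> EE \<Longrightarrow> \<exists>D\<in>EE. E O F\<inverse> \<subseteq> D"
  using bl_D2 by blast

lemma bl_inv: assumes "ballean X EE" "E \<in> EE" shows "\<exists>D\<in>EE. E\<inverse> \<subseteq> D"
proof -
  obtain D where D: "D \<in> EE" "E O E\<inverse> \<subseteq> D" using bl_comp0[OF assms assms(2)] by blast
  have "E\<inverse> \<subseteq> E O E\<inverse>"
  proof
    fix p assume "p \<in> E\<inverse>"
    then obtain a b where p: "p = (a,b)" "(b,a) \<in> E" by auto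
    then have "a \<in> X" using bl_sub[OF assms] by auto
    then have "(a,a) \<in> E" using bl_id[OF assms] by blast
    then show "p \<in> E O E\<inverse>" using p by auto
  qed
  then show ?thesis using D by blast
qed

lemma bl_comp: assumes "ballean X EE" "E \<in> EE" "F \<in> EE" shows "\<exists>D\<in>EE. E O F \<subseteq> D"
proof -
  obtain D1 where D1: "D1 \<in> EE" "F\<inverse> \<subseteq> D1" using bl_inv[OF assms(1,3)] by blast
  obtain D where D: "D \<in> EE" "E O D1\<inverse> \<subseteq> D" using bl_comp0[OF assms(1,2) D1(1)] by blast
  have "F \<subseteq> D1\<inverse>" using D1 by auto
  then have "E O F \<subseteq> E O D1\<inverse>" by auto
  then show ?thesis using D by blast
qed

lemma bl_un: assumes "ballean X EE" "E \<in> EE" "F \<in> EE" shows "\<exists>D\<in>EE. E \<union> F \<subseteq> D"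
proof -
  obtain D where D: "D \<in> EE" "E O F \<subseteq> D" using bl_comp[OF assms] by blast
  have "E \<subseteq> E O F"
  proof
    fix p assume "p \<in> E"
    then obtain a b where p: "p = (a,b)" "(a,b) \<in> E" by (cases p) auto
    then have "(b,b) \<in> F" using bl_sub[OF assms(1,2)] bl_id[OF assms(1,3)] by auto
    then show "p \<in> E O F" using p by auto
  qed
  moreover have "F \<subseteq> E O F"
  proof
    fix p assume "p \<in> F"
    then obtain a b where p: "p = (a,b)" "(a,b) \<in> F" by (cases p) auto
    then have "(a,a) \<in> E" using bl_sub[OF assms(1,3)] bl_id[OF assms(1,2)] by auto
    then show "p \<in> E O F" using p by auto
  qed
  ultimately have "E \<union> F \<subseteq> E O F" by (rule Un_least)
  then have "E \<union> F \<subseteq> D" using D(2) by (rule subset_trans)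
  then show ?thesis using D(1) by blast
qed

lemma bl_pair: assumes "ballean X EE" "x \<in> X" "y \<in> X" shows "\<exists>E\<in>EE. (x,y) \<in> E"
proof -
  have "(x,y) \<in> \<Union>EE" using bl_D3[OF assms(1)] assms(2,3) by simp
  then show ?thesis by blast
qed

lemma bd_subX: assumes "ballean X EE" "bounded_set X EE S" shows "S \<subseteq> X"
proof -
  obtain E x where "E \<in> EE" "x \<in> X" "S \<subseteq> E `` {x}" using assms(2) unfolding bounded_set_def by blast
  then show ?thesis using bl_sub[OF assms(1)] by blast
qed

lemma bd_mono: "S \<subseteq> T \<Longrightarrow> bounded_set X EE T \<Longrightarrow> bounded_set X EE S"
  unfolding bounded_set_def by blast

lemma bd_center:
  assumes bl: "ballean X EE" and S: "bounded_set X EE S" and x0: "x0 \<in> X"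
  shows "\<exists>E\<in>EE. S \<subseteq> E `` {x0}"
proof -
  obtain E1 x1 where E1: "E1 \<in> EE" "x1 \<in> X" "S \<subseteq> E1 `` {x1}" using S unfolding bounded_set_def by blast
  obtain F where F: "F \<in> EE" "(x0,x1) \<in> F" using bl_pair[OF bl x0 E1(2)] by blast
  obtain D where D: "D \<in> EE" "F O E1 \<subseteq> D" using bl_comp[OF bl F(1) E1(1)] by blast
  have "S \<subseteq> D `` {x0}" using E1(3) F(2) D(2) by blast
  then show ?thesis using D(1) by blast
qed

lemma bd_intro: "E \<in> EE \<Longrightarrow> x \<in> X \<Longrightarrow> S \<subseteq> E `` {x} \<Longrightarrow> bounded_set X EE S"
  unfolding bounded_set_def by blast

lemma bd_un:
  assumes bl: "ballean X EE" and ne: "X \<noteq> {}" and S: "bounded_set X EE S" and T: "bounded_set X EE T"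
  shows "bounded_set X EE (S \<union> T)"
proof -
  obtain x0 where x0: "x0 \<in> X" using ne by blast
  obtain E where E: "E \<in> EE" "S \<subseteq> E `` {x0}" using bd_center[OF bl S x0] by blast
  obtain F where F: "F \<in> EE" "T \<subseteq> F `` {x0}" using bd_center[OF bl T x0] by blast
  obtain D where D: "D \<in> EE" "E \<union> F \<subseteq> D" using bl_un[OF bl E(1) F(1)] by blast
  have "S \<union> T \<subseteq> D `` {x0}" using E F D by blast
  then show ?thesis using bd_intro[OF D(1) x0] by blast
qed

lemma bd_img:
  assumes bl: "ballean X EE" and S: "bounded_set X EE S" and E: "E \<in> EE"
  shows "bounded_set X EE (E `` S)"
proof -
  obtain F x1 where F: "F \<in> EE" "x1 \<in> X" "S \<subseteq> F `` {x1}" using S unfolding bounded_set_def by blast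
  obtain D where D: "D \<in> EE" "F O E \<subseteq> D" using bl_comp[OF bl F(1) E] by blast
  have "E `` S \<subseteq> D `` {x1}" using F(3) D(2) by blast
  then show ?thesis using bd_intro[OF D(1) F(2)] by blast
qed

lemma bd_img_inv:
  assumes bl: "ballean X EE" and S: "bounded_set X EE S" and E: "E \<in> EE"
  shows "bounded_set X EE (E\<inverse> `` S)"
proof -
  obtain D where D: "D \<in> EE" "E\<inverse> \<subseteq> D" using bl_inv[OF bl E] by blast
  have "E\<inverse> `` S \<subseteq> D `` S" using D by blast
  then show ?thesis using bd_mono[OF _ bd_img[OF bl S D(1)]] by blast
qed

lemma bd_single: assumes bl: "ballean X EE" and x: "x \<in> X" shows "bounded_set X EE {x}"
proof -
  obtain E where "E \<in> EE" "(x,x) \<in> E" using bl_pair[OF bl x x] by blast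
  then show ?thesis using bd_intro[OF _ x, of E EE "{x}"] by blast
qed

lemma bd_empty: assumes "ballean X EE" "X \<noteq> {}" shows "bounded_set X EE {}"
proof -
  obtain x where "x \<in> X" using assms(2) by blast
  then show ?thesis using bd_mono[OF _ bd_single[OF assms(1)], of "{}" x] by blast
qed

lemma bd_pair: assumes bl: "ballean X EE" and x: "x \<in> X" and y: "y \<in> X"
  shows "bounded_set X EE {x,y}"
proof -
  obtain E where E: "E \<in> EE" "(x,y) \<in> E" using bl_pair[OF bl x y] by blast
  have "(x,x) \<in> E" using bl_id[OF bl E(1) x] .
  then show ?thesis using bd_intro[OF E(1) x, of "{x,y}"] E(2) by blast
qed

lemma bd_cross:
  assumes bl: "ballean X EE" and S: "bounded_set X EE S" and x0: "x0 \<in> X"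
  shows "\<exists>E\<in>EE. S \<times> {x0} \<subseteq> E \<and> {x0} \<times> S \<subseteq> E"
proof -
  obtain F where F: "F \<in> EE" "S \<subseteq> F `` {x0}" using bd_center[OF bl S x0] by blast
  obtain F' where F': "F' \<in> EE" "F\<inverse> \<subseteq> F'" using bl_inv[OF bl F(1)] by blast
  obtain D where D: "D \<in> EE" "F \<union> F' \<subseteq> D" using bl_un[OF bl F(1) F'(1)] by blast
  have "S \<times> {x0} \<subseteq> D" using F F' D by blast
  moreover have "{x0} \<times> S \<subseteq> D" using F D by blast
  ultimately show ?thesis using D(1) by blast
qed

lemma car_single: "ballean X EE \<Longrightarrow> x \<in> X \<Longrightarrow> {x} \<in> hyp2_carrier X EE"
  unfolding hyp2_carrier_def using bd_single by auto

lemma car_pair: "ballean X EE \<Longrightarrow> x \<in> X \<Longrightarrow> y \<in> X \<Longrightarrow> {x,y} \<in> hyp2_carrier X EE"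
  unfolding hyp2_carrier_def using bd_pair[of X EE x y] by (auto simp: card_insert_if)

lemma car_bd: "K \<in> hyp2_carrier X EE \<Longrightarrow> bounded_set X EE K"
  unfolding hyp2_carrier_def by auto

lemma car_ne: "K \<in> hyp2_carrier X EE \<Longrightarrow> K \<noteq> {}"
  unfolding hyp2_carrier_def by auto

lemma hyp_mem: "(K1,K2) \<in> hyp_entourage X EE E \<longleftrightarrow>
   K1 \<in> hyp2_carrier X EE \<and> K2 \<in> hyp2_carrier X EE \<and> K1 \<subseteq> E `` K2 \<and> K2 \<subseteq> E `` K1"
  unfolding hyp_entourage_def by auto

lemma hyp_img_car: "hyp_entourage X EE E `` A \<subseteq> hyp2_carrier X EE"
  unfolding hyp_entourage_def by auto

lemma hyp_bd_union:
  assumes bl: "ballean X EE"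
    and H: "bounded_set (hyp2_carrier X EE) (hyp2_entourages X EE) KK"
  shows "bounded_set X EE (\<Union>KK)"
proof -
  obtain E K0 where E: "E \<in> EE" "K0 \<in> hyp2_carrier X EE" "KK \<subseteq> hyp_entourage X EE E `` {K0}"
    using H unfolding bounded_set_def hyp2_entourages_def by blast
  have "\<Union>KK \<subseteq> E `` K0" using E(3) unfolding hyp_entourage_def by blast
  moreover have "bounded_set X EE (E `` K0)" using bd_img[OF bl car_bd[OF E(2)] E(1)] .
  ultimately show ?thesis using bd_mono[of "\<Union>KK" "E `` K0"] by blast
qed

lemma hyp_bd_of:
  assumes bl: "ballean X EE" and ne: "X \<noteq> {}"
    and sub: "KK \<subseteq> hyp2_carrier X EE" and bd: "bounded_set X EE (\<Union>KK)"
  shows "bounded_set (hyp2_carrier X EE) (hyp2_entourages X EE) KK"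
proof -
  obtain x0 where x0: "x0 \<in> X" using ne by blast
  obtain F where F: "F \<in> EE" "\<Union>KK \<subseteq> F `` {x0}" using bd_center[OF bl bd x0] by blast
  obtain F' where F': "F' \<in> EE" "F\<inverse> \<subseteq> F'" using bl_inv[OF bl F(1)] by blast
  obtain D where D: "D \<in> EE" "F \<union> F' \<subseteq> D" using bl_un[OF bl F(1) F'(1)] by blast
  have "KK \<subseteq> hyp_entourage X EE D `` {{x0}}"
  proof
    fix K assume K: "K \<in> KK"
    then have Kc: "K \<in> hyp2_carrier X EE" using sub by blast
    then obtain k where k: "k \<in> K" using car_ne by blast
    have "K \<subseteq> F `` {x0}" using F(2) K by blast
    then have "K \<subseteq> D `` {x0}" using D by blast
    moreover have "(k, x0) \<in> D" using k \<open>K \<subseteq> F `` {x0}\<close> F' D by blast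
    then have "{x0} \<subseteq> D `` K" using k by blast
    ultimately show "K \<in> hyp_entourage X EE D `` {{x0}}"
      using hyp_mem[of "{x0}" K X EE D] car_single[OF bl x0] Kc by blast
  qed
  then show ?thesis unfolding bounded_set_def hyp2_entourages_def
    using car_single[OF bl x0] D(1) by blast
qed

lemma part1:
  assumes bl: "ballean X EE" and ne: "X \<noteq> {}"
    and nm: "normal_ballean (hyp2_carrier X EE) (hyp2_entourages X EE)"
  shows "\<exists>G. G \<subseteq> X \<times> X \<and> sym G \<and> (\<forall>S. bounded_set X EE S \<longrightarrow> bounded_set X EE (G `` S)) \<and>
           (\<forall>E\<in>EE. \<exists>K. bounded_set X EE K \<and> (\<forall>x\<in>X - K. E `` {x} \<subseteq> G `` {x}))"
proof -
  obtain x0 where x0: "x0 \<in> X" using ne by blast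
  let ?C = "hyp2_carrier X EE"
  let ?H = "hyp_entourage X EE"
  define SS where "SS = (\<lambda>x. {x}) ` X"
  define LL where "LL = (\<lambda>x. {x,x0}) ` X"
  have SSc: "SS \<subseteq> ?C" unfolding SS_def using car_single[OF bl] by blast
  have LLc: "LL \<subseteq> ?C" unfolding LL_def using car_pair[OF bl _ x0] by blast
  have disj: "asymp_disjoint ?C (hyp2_entourages X EE) SS LL"
    unfolding asymp_disjoint_def
  proof (intro ballI)
    fix HE assume "HE \<in> hyp2_entourages X EE"
    then obtain E where HE: "HE = ?H E" and E: "E \<in> EE" unfolding hyp2_entourages_def by blast
    obtain D1 where D1: "D1 \<in> EE" "E O E \<subseteq> D1" using bl_comp[OF bl E E] by blast
    obtain D2 where D2: "D2 \<in> EE" "D1\<inverse> \<subseteq> D2" using bl_inv[OF bl D1(1)] by blast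
    obtain D3 where D3: "D3 \<in> EE" "D2 O E \<subseteq> D3" using bl_comp[OF bl D2(1) E] by blast
    have "\<Union>(?H E `` SS \<inter> ?H E `` LL) \<subseteq> D3 `` {x0}"
    proof
      fix k assume "k \<in> \<Union>(?H E `` SS \<inter> ?H E `` LL)"
      then obtain K where K: "K \<in> ?H E `` SS" "K \<in> ?H E `` LL" "k \<in> K" by blast
      obtain S1 where S1: "S1 \<in> SS" "(S1, K) \<in> ?H E" using K(1) by (rule ImageE)
      obtain z where "S1 = {z}" using S1(1) unfolding SS_def by (rule imageE)
      then have z: "({z}, K) \<in> ?H E" using S1(2) by simp
      obtain L1 where L1: "L1 \<in> LL" "(L1, K) \<in> ?H E" using K(2) by (rule ImageE)
      obtain y where "L1 = {y,x0}" using L1(1) unfolding LL_def by (rule imageE)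
      then have y: "({y,x0}, K) \<in> ?H E" using L1(2) by simp
      have Kz: "K \<subseteq> E `` {z}" using z unfolding hyp_mem by blast
      have "x0 \<in> E `` K" using y unfolding hyp_mem by blast
      then obtain k' where k': "k' \<in> K" "(k', x0) \<in> E" by blast
      have "(z, k') \<in> E" using Kz k'(1) by blast
      then have "(z, x0) \<in> E O E" using k'(2) by blast
      then have "(x0, z) \<in> D2" using D1 D2 by blast
      moreover have "(z, k) \<in> E" using Kz K(3) by blast
      ultimately have "(x0, k) \<in> D2 O E" by blast
      then show "k \<in> D3 `` {x0}" using D3 by blast
    qed
    moreover have "bounded_set X EE (D3 `` {x0})" using bd_intro[OF D3(1) x0] by blast
    ultimately have "bounded_set X EE (\<Union>(?H E `` SS \<inter> ?H E `` LL))" by (rule bd_mono)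
    then show "bounded_set ?C (hyp2_entourages X EE) (HE `` SS \<inter> HE `` LL)"
    proof -
      have "?H E `` SS \<inter> ?H E `` LL \<subseteq> ?C" using hyp_img_car by blast
      then show ?thesis using hyp_bd_of[OF bl ne _ \<open>bounded_set X EE (\<Union>(?H E `` SS \<inter> ?H E `` LL))\<close>] HE by simp
    qed
  qed
  obtain UU VV where UV: "UU \<subseteq> ?C" "VV \<subseteq> ?C" "asymp_nbhd ?C (hyp2_entourages X EE) UU SS"
    "asymp_nbhd ?C (hyp2_entourages X EE) VV LL" "UU \<inter> VV = {}"
    using nm[unfolded normal_ballean_def, rule_format, OF SSc LLc disj] by blast
  have nbU: "bounded_set X EE (\<Union>(?H E `` SS - UU))" if "E \<in> EE" for E
  proof -
    have "?H E \<in> hyp2_entourages X EE" unfolding hyp2_entourages_def using that by blast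
    then have "bounded_set ?C (hyp2_entourages X EE) (?H E `` SS - UU)"
      using UV(3) unfolding asymp_nbhd_def by blast
    then show ?thesis by (rule hyp_bd_union[OF bl])
  qed
  have nbV: "bounded_set X EE (\<Union>(?H E `` LL - VV))" if "E \<in> EE" for E
  proof -
    have "?H E \<in> hyp2_entourages X EE" unfolding hyp2_entourages_def using that by blast
    then have "bounded_set ?C (hyp2_entourages X EE) (?H E `` LL - VV)"
      using UV(4) unfolding asymp_nbhd_def by blast
    then show ?thesis by (rule hyp_bd_union[OF bl])
  qed
  define G where "G = {(x,y). x \<in> X \<and> y \<in> X \<and> {x,y} \<in> UU}"
  have "G \<subseteq> X \<times> X" unfolding G_def by auto
  moreover have "sym G" unfolding G_def sym_def by (auto simp: insert_commute)
  moreover have "bounded_set X EE (G `` S)" if S: "bounded_set X EE S" for S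
  proof -
    obtain E where E: "E \<in> EE" "S \<times> {x0} \<subseteq> E" "{x0} \<times> S \<subseteq> E" using bd_cross[OF bl S x0] by blast
    have "G `` S \<subseteq> \<Union>(?H E `` LL - VV)"
    proof
      fix y assume "y \<in> G `` S"
      then obtain c where c: "c \<in> S" "y \<in> X" "{c,y} \<in> UU" unfolding G_def by blast
      have cX: "c \<in> X" using bd_subX[OF bl S] c(1) by blast
      have "({y,x0}, {c,y}) \<in> ?H E"
        unfolding hyp_mem
      proof (intro conjI)
        show "{y,x0} \<in> ?C" using car_pair[OF bl c(2) x0] .
        show "{c,y} \<in> ?C" using car_pair[OF bl cX c(2)] .
        have "(y,y) \<in> E" using bl_id[OF bl E(1) c(2)] .
        moreover have "(c,x0) \<in> E" using E(2) c(1) by blast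
        ultimately show "{y,x0} \<subseteq> E `` {c,y}" by blast
        have "(x0,c) \<in> E" using E(3) c(1) by blast
        then show "{c,y} \<subseteq> E `` {y,x0}" using \<open>(y,y) \<in> E\<close> by blast
      qed
      moreover have "{y,x0} \<in> LL" unfolding LL_def using c(2) by blast
      ultimately have "{c,y} \<in> ?H E `` LL" by (rule ImageI)
      moreover have "{c,y} \<notin> VV" using c(3) UV(5) by blast
      ultimately have "{c,y} \<in> ?H E `` LL - VV" by blast
      then show "y \<in> \<Union>(?H E `` LL - VV)" by blast
    qed
    then show ?thesis using nbV[OF E(1)] by (rule bd_mono)
  qed
  moreover have "\<exists>K. bounded_set X EE K \<and> (\<forall>x\<in>X - K. E `` {x} \<subseteq> G `` {x})" if E: "E \<in> EE" for E
  proof (intro exI conjI ballI)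
    show "bounded_set X EE (\<Union>(?H E `` SS - UU))" using nbU[OF E] .
    fix x assume x: "x \<in> X - \<Union>(?H E `` SS - UU)"
    show "E `` {x} \<subseteq> G `` {x}"
    proof
      fix y assume y: "y \<in> E `` {x}"
      have yX: "y \<in> X" using y bl_sub[OF bl E] by blast
      have xX: "x \<in> X" using x by blast
      have "({x}, {x,y}) \<in> ?H E"
        unfolding hyp_mem
      proof (intro conjI)
        show "{x} \<in> ?C" using car_single[OF bl xX] .
        show "{x,y} \<in> ?C" using car_pair[OF bl xX yX] .
        have "(x,x) \<in> E" using bl_id[OF bl E xX] .
        then show "{x} \<subseteq> E `` {x,y}" by blast
        show "{x,y} \<subseteq> E `` {x}" using \<open>(x,x) \<in> E\<close> y by blast
      qed
      moreover have "{x} \<in> SS" unfolding SS_def using xX by blast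
      ultimately have m: "{x,y} \<in> ?H E `` SS" by (rule ImageI)
      have "{x,y} \<in> UU"
      proof (rule ccontr)
        assume "{x,y} \<notin> UU"
        then have "{x,y} \<in> ?H E `` SS - UU" using m by blast
        then have "x \<in> \<Union>(?H E `` SS - UU)" by blast
        then show False using x by blast
      qed
      then show "y \<in> G `` {x}" unfolding G_def using xX yX by blast
    qed
  qed
  ultimately show ?thesis by blast
qed

lemma key_small:
  fixes bd :: "'a set \<Rightarrow> bool" and G :: "'a rel"
  assumes mono: "\<And>S T. T \<subseteq> S \<Longrightarrow> bd S \<Longrightarrow> bd T"
    and un: "\<And>S T. bd S \<Longrightarrow> bd T \<Longrightarrow> bd (S \<union> T)"
    and sing: "\<And>x. x \<in> W \<union> B \<Longrightarrow> bd {x}"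
    and gim: "\<And>S. bd S \<Longrightarrow> bd (G `` S)"
    and nW: "\<not> bd W" and nB: "\<not> bd B"
    and cover: "\<And>S. bd S \<Longrightarrow> S \<subseteq> (S \<inter> W) \<union> G `` (G `` S \<inter> B)"
    and bda: "\<And>C. bd C \<Longrightarrow> C \<subseteq> B \<Longrightarrow> bd (\<alpha> C)"
    and bdb: "\<And>C. bd C \<Longrightarrow> C \<subseteq> W \<Longrightarrow> bd (\<beta> C)"
    and dich: "\<And>C C'. bd C \<Longrightarrow> C \<subseteq> B \<Longrightarrow> bd C' \<Longrightarrow> C' \<subseteq> W \<Longrightarrow> C' \<subseteq> \<alpha> C \<or> C \<subseteq> \<beta> C'"
    and CC: "cofam bd CC" and mn: "\<forall>C'. cofam bd C' \<longrightarrow> (card_of CC, card_of C') \<in> ordLeq"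
    and FF: "FF \<subseteq> CC" and lt: "(card_of FF, card_of CC) \<in> ordLess"
  shows "bd (\<Union>FF)"
proof -
  have bdF: "bd F" if "F \<in> FF" for F using CC FF that unfolding cofam_def by blast
  have small_not_cof: False if "cofam bd (f ` FF)" for f :: "'a set \<Rightarrow> 'a set"
  proof -
    have "(card_of CC, card_of (f ` FF)) \<in> ordLeq" using mn that by blast
    moreover have "(card_of (f ` FF), card_of FF) \<in> ordLeq" by (rule card_of_image)
    ultimately have "(card_of CC, card_of FF) \<in> ordLeq" by (rule ordLeq_transitive)
    then have "(card_of CC, card_of CC) \<in> ordLess" using lt by (rule ordLeq_ordLess_trans)
    then show False using ordLess_irreflexive by blast
  qed
  have outB: "\<exists>b\<in>B. b \<notin> T" if "bd T" for T
  proof (rule ccontr)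
    assume "\<not> (\<exists>b\<in>B. b \<notin> T)"
    then have "B \<subseteq> T" by blast
    then show False using mono that nB by blast
  qed
  have outW: "\<exists>w\<in>W. w \<notin> T" if "bd T" for T
  proof (rule ccontr)
    assume "\<not> (\<exists>w\<in>W. w \<notin> T)"
    then have "W \<subseteq> T" by blast
    then show False using mono that nW by blast
  qed
  have bdI: "bd (S \<inter> W)" "bd (S \<inter> B)" if "bd S" for S using mono that by (blast, blast)
  have "\<exists>C1. bd C1 \<and> C1 \<subseteq> B \<and> (\<forall>F\<in>FF. \<not> C1 \<subseteq> \<beta> (F \<inter> W))"
  proof (rule ccontr)
    assume na: "\<not> ?thesis"
    define g where "g F = \<alpha> (\<beta> (F \<inter> W) \<inter> B) \<union> G `` (\<beta> (F \<inter> W) \<inter> B)" for F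
    have "cofam bd (g ` FF)" unfolding cofam_def
    proof (intro conjI ballI allI impI)
      fix A assume "A \<in> g ` FF"
      then obtain F where F: "F \<in> FF" "A = g F" by blast
      have "bd (\<beta> (F \<inter> W))" using bdb bdI(1)[OF bdF[OF F(1)]] by blast
      then have "bd (\<beta> (F \<inter> W) \<inter> B)" using bdI(2) by blast
      then show "bd A" unfolding F(2) g_def using un bda gim by blast
    next
      fix S assume S: "bd S"
      have b1: "bd (\<beta> (S \<inter> W))" using bdb bdI(1)[OF S] by blast
      obtain b where b: "b \<in> B" "b \<notin> \<beta> (S \<inter> W)" using outB[OF b1] by blast
      define C0 where "C0 = (G `` S \<inter> B) \<union> {b}"
      have "bd {b}" using sing b(1) by blast
      then have "bd C0" unfolding C0_def by (rule un[OF bdI(2)[OF gim[OF S]]])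
      moreover have "C0 \<subseteq> B" unfolding C0_def using b(1) by blast
      ultimately have C0: "bd C0" "C0 \<subseteq> B" by blast+
      then obtain F where F: "F \<in> FF" "C0 \<subseteq> \<beta> (F \<inter> W)" using na by blast
      define Cc where "Cc = \<beta> (F \<inter> W) \<inter> B"
      have Cc: "bd Cc" "Cc \<subseteq> B" unfolding Cc_def using bdb bdI bdF[OF F(1)] by auto
      have "C0 \<subseteq> Cc" unfolding Cc_def using F(2) C0(2) by blast
      have "S \<inter> W \<subseteq> \<alpha> Cc"
      proof -
        have "S \<inter> W \<subseteq> \<alpha> Cc \<or> Cc \<subseteq> \<beta> (S \<inter> W)" using dich[OF Cc bdI(1)[OF S]] by blast
        moreover have "b \<in> Cc" using \<open>C0 \<subseteq> Cc\<close> unfolding C0_def by blast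
        ultimately show ?thesis using b(2) by blast
      qed
      moreover have "G `` (G `` S \<inter> B) \<subseteq> G `` Cc" using \<open>C0 \<subseteq> Cc\<close> unfolding C0_def by blast
      ultimately have "S \<subseteq> g F" using cover[OF S] unfolding g_def Cc_def by blast
      then show "\<exists>A\<in>g ` FF. S \<subseteq> A" using F(1) by blast
    qed
    then show False by (rule small_not_cof)
  qed
  then obtain C1 where C1: "bd C1" "C1 \<subseteq> B" "\<forall>F\<in>FF. \<not> C1 \<subseteq> \<beta> (F \<inter> W)" by blast
  have "\<exists>C2. bd C2 \<and> C2 \<subseteq> W \<and> (\<forall>F\<in>FF. \<not> C2 \<subseteq> \<alpha> (G `` F \<inter> B))"
  proof (rule ccontr)
    assume na: "\<not> ?thesis"
    define g where "g F = (\<alpha> (G `` F \<inter> B) \<inter> W) \<union> G `` (\<beta> (\<alpha> (G `` F \<inter> B) \<inter> W))" for F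
    have "cofam bd (g ` FF)" unfolding cofam_def
    proof (intro conjI ballI allI impI)
      fix A assume "A \<in> g ` FF"
      then obtain F where F: "F \<in> FF" "A = g F" by blast
      have "bd (\<alpha> (G `` F \<inter> B))" using bda bdI(2)[OF gim[OF bdF[OF F(1)]]] by blast
      then have "bd (\<alpha> (G `` F \<inter> B) \<inter> W)" using bdI(1) by blast
      then show "bd A" unfolding F(2) g_def using un bdb gim by blast
    next
      fix S assume S: "bd S"
      have a1: "bd (\<alpha> (G `` S \<inter> B))" using bda bdI(2)[OF gim[OF S]] by blast
      obtain w where w: "w \<in> W" "w \<notin> \<alpha> (G `` S \<inter> B)" using outW[OF a1] by blast
      define C0 where "C0 = (S \<inter> W) \<union> {w}"
      have "bd {w}" using sing w(1) by blast
      then have "bd C0" unfolding C0_def by (rule un[OF bdI(1)[OF S]])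
      moreover have "C0 \<subseteq> W" unfolding C0_def using w(1) by blast
      ultimately have C0: "bd C0" "C0 \<subseteq> W" by blast+
      then obtain F where F: "F \<in> FF" "C0 \<subseteq> \<alpha> (G `` F \<inter> B)" using na by blast
      define Cc where "Cc = \<alpha> (G `` F \<inter> B) \<inter> W"
      have Cc: "bd Cc" "Cc \<subseteq> W" unfolding Cc_def using bda bdI gim bdF[OF F(1)] by auto
      have "C0 \<subseteq> Cc" unfolding Cc_def using F(2) C0(2) by blast
      have "G `` S \<inter> B \<subseteq> \<beta> Cc"
      proof -
        have "Cc \<subseteq> \<alpha> (G `` S \<inter> B) \<or> G `` S \<inter> B \<subseteq> \<beta> Cc"
          using dich[OF bdI(2)[OF gim[OF S]] _ Cc] by blast
        moreover have "w \<in> Cc" using \<open>C0 \<subseteq> Cc\<close> unfolding C0_def by blast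
        ultimately show ?thesis using w(2) by blast
      qed
      then have "G `` (G `` S \<inter> B) \<subseteq> G `` (\<beta> Cc)" by blast
      moreover have "S \<inter> W \<subseteq> Cc" using \<open>C0 \<subseteq> Cc\<close> unfolding C0_def by blast
      ultimately have "S \<subseteq> g F" using cover[OF S] unfolding g_def Cc_def by blast
      then show "\<exists>A\<in>g ` FF. S \<subseteq> A" using F(1) by blast
    qed
    then show False by (rule small_not_cof)
  qed
  then obtain C2 where C2: "bd C2" "C2 \<subseteq> W" "\<forall>F\<in>FF. \<not> C2 \<subseteq> \<alpha> (G `` F \<inter> B)" by blast
  have "\<Union>FF \<subseteq> \<alpha> C1 \<union> G `` (\<beta> C2)"
  proof
    fix x assume "x \<in> \<Union>FF"
    then obtain F where F: "F \<in> FF" "x \<in> F" by blast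
    have bF: "bd F" using bdF[OF F(1)] .
    have "F \<inter> W \<subseteq> \<alpha> C1" using dich[OF C1(1,2) bdI(1)[OF bF]] C1(3) F(1) by blast
    moreover have "G `` F \<inter> B \<subseteq> \<beta> C2" using dich[OF bdI(2)[OF gim[OF bF]] _ C2(1,2)] C2(3) F(1) by blast
    then have "G `` (G `` F \<inter> B) \<subseteq> G `` (\<beta> C2)" by blast
    ultimately show "x \<in> \<alpha> C1 \<union> G `` (\<beta> C2)" using cover[OF bF] F(2) by blast
  qed
  moreover have "bd (\<alpha> C1 \<union> G `` (\<beta> C2))" using un bda[OF C1(1,2)] gim bdb[OF C2(1,2)] by blast
  ultimately show ?thesis using mono by blast
qed

lemma part2:
  assumes bl: "ballean X EE" and ne: "X \<noteq> {}"
    and nm: "normal_ballean (hyp2_carrier X EE) (hyp2_entourages X EE)"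
    and Gsub: "G \<subseteq> X \<times> X" and Gsym: "sym G"
    and Gim: "\<forall>S. bounded_set X EE S \<longrightarrow> bounded_set X EE (G `` S)"
    and Gdom: "\<forall>E\<in>EE. \<exists>K. bounded_set X EE K \<and> (\<forall>x\<in>X - K. E `` {x} \<subseteq> G `` {x})"
    and AX: "A \<subseteq> X" and BX: "B \<subseteq> X" and nA: "\<not> bounded_set X EE A" and nB: "\<not> bounded_set X EE B"
    and AB: "asymp_disjoint X EE A B"
  shows "has_linear_bornology_base X EE"
proof -
  let ?bd = "bounded_set X EE"
  let ?C = "hyp2_carrier X EE"
  let ?H = "hyp_entourage X EE"
  define G' where "G' = G - (A \<times> B \<union> B \<times> A)"
  have G'sym: "sym G'" using Gsym unfolding G'_def sym_def by blast
  have G'im: "?bd (G' `` S)" if "?bd S" for S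
  proof -
    have "G' `` S \<subseteq> G `` S" unfolding G'_def by blast
    then show ?thesis using Gim that by (meson bd_mono)
  qed
  have G'dom: "\<exists>K. ?bd K \<and> (\<forall>x\<in>X - K. E `` {x} \<subseteq> G' `` {x})" if E: "E \<in> EE" for E
  proof -
    obtain K0 where K0: "?bd K0" "\<forall>x\<in>X - K0. E `` {x} \<subseteq> G `` {x}" using Gdom E by blast
    obtain E1 where E1: "E1 \<in> EE" "E\<inverse> \<subseteq> E1" using bl_inv[OF bl E] by blast
    obtain D where D: "D \<in> EE" "E \<union> E1 \<subseteq> D" using bl_un[OF bl E E1(1)] by blast
    define Z where "Z = D `` A \<inter> D `` B"
    have Z: "?bd Z" using AB D(1) unfolding asymp_disjoint_def Z_def by blast
    have "?bd (K0 \<union> Z)" using bd_un[OF bl ne K0(1) Z] .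
    moreover have "\<forall>x\<in>X - (K0 \<union> Z). E `` {x} \<subseteq> G' `` {x}"
    proof (intro ballI subsetI)
      fix x y assume x: "x \<in> X - (K0 \<union> Z)" and y: "y \<in> E `` {x}"
      have xy: "(x,y) \<in> E" using y by blast
      have "(x,y) \<in> G" using K0(2) x y by blast
      moreover have "(x,y) \<notin> A \<times> B \<union> B \<times> A"
      proof
        assume "(x,y) \<in> A \<times> B \<union> B \<times> A"
        moreover have "(x,x) \<in> D" using bl_id[OF bl D(1)] x by blast
        moreover have "(x,y) \<in> D" "(y,x) \<in> D" using xy E1 D by blast+
        ultimately have "x \<in> Z" unfolding Z_def by blast
        then show False using x by blast
      qed
      ultimately show "y \<in> G' `` {x}" unfolding G'_def by blast
    qed
    ultimately show ?thesis by blast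
  qed
  define W where "W = X - G' `` B"
  have AW: "A \<subseteq> W" unfolding W_def G'_def using AX by blast
  have nW: "\<not> ?bd W" using AW nA bd_mono by blast
  have WX: "W \<subseteq> X" unfolding W_def by blast
  have WB: "?bd (E `` W \<inter> E `` B)" if E: "E \<in> EE" for E
  proof -
    obtain E1 where E1: "E1 \<in> EE" "E\<inverse> \<subseteq> E1" using bl_inv[OF bl E] by blast
    obtain D where D: "D \<in> EE" "E O E1 \<subseteq> D" using bl_comp[OF bl E E1(1)] by blast
    obtain K where K: "?bd K" "\<forall>x\<in>X - K. D `` {x} \<subseteq> G' `` {x}" using G'dom[OF D(1)] by blast
    have "E `` W \<inter> E `` B \<subseteq> E `` K"
    proof
      fix x assume "x \<in> E `` W \<inter> E `` B"
      then obtain w b where wb: "w \<in> W" "(w,x) \<in> E" "b \<in> B" "(b,x) \<in> E" by blast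
      have "(b,w) \<in> E O E1" using wb E1 by blast
      then have bw: "(b,w) \<in> D" using D by blast
      have "b \<in> K"
      proof (rule ccontr)
        assume "b \<notin> K"
        then have "D `` {b} \<subseteq> G' `` {b}" using K(2) BX wb(3) by blast
        then have "w \<in> G' `` B" using bw wb(3) by blast
        then show False using wb(1) unfolding W_def by blast
      qed
      then show "x \<in> E `` K" using wb(4) by blast
    qed
    then show ?thesis using bd_img[OF bl K(1) E] by (meson bd_mono)
  qed
  have cover: "S \<subseteq> (S \<inter> W) \<union> G' `` (G' `` S \<inter> B)" if S: "?bd S" for S
  proof
    fix x assume x: "x \<in> S"
    show "x \<in> (S \<inter> W) \<union> G' `` (G' `` S \<inter> B)"
    proof (cases "x \<in> W")
      case True then show ?thesis using x by blast
    next
      case False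
      then have "x \<in> G' `` B" using bd_subX[OF bl S] x unfolding W_def by blast
      then obtain b where b: "b \<in> B" "(b,x) \<in> G'" by blast
      then have "(x,b) \<in> G'" using G'sym unfolding sym_def by blast
      then show ?thesis using b x by blast
    qed
  qed
  have Wne: "W \<noteq> {}" using nW bd_empty[OF bl ne] by blast
  have Bne: "B \<noteq> {}" using nB bd_empty[OF bl ne] by blast
  obtain w0 where w0: "w0 \<in> W" using Wne by blast
  obtain b0 where b0: "b0 \<in> B" using Bne by blast
  have w0X: "w0 \<in> X" and b0X: "b0 \<in> X" using w0 WX b0 BX by blast+
  define LW where "LW = (\<lambda>w. {w,b0}) ` W"
  define LB where "LB = (\<lambda>b. {w0,b}) ` B"
  have LWc: "LW \<subseteq> ?C" unfolding LW_def using car_pair[OF bl _ b0X] WX by blast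
  have LBc: "LB \<subseteq> ?C" unfolding LB_def using car_pair[OF bl w0X] BX by blast
  have disj: "asymp_disjoint ?C (hyp2_entourages X EE) LW LB"
    unfolding asymp_disjoint_def
  proof (intro ballI)
    fix HE assume "HE \<in> hyp2_entourages X EE"
    then obtain E where HE: "HE = ?H E" and E: "E \<in> EE" unfolding hyp2_entourages_def by blast
    obtain E1 where E1: "E1 \<in> EE" "E\<inverse> \<subseteq> E1" using bl_inv[OF bl E] by blast
    obtain D where D: "D \<in> EE" "E \<union> E1 \<subseteq> D" using bl_un[OF bl E E1(1)] by blast
    define Z where "Z = D `` W \<inter> D `` B"
    have Z: "?bd Z" unfolding Z_def using WB[OF D(1)] .
    define M1 where "M1 = E `` (E `` {w0}) \<union> E `` Z"
    have M1: "?bd M1" unfolding M1_def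
      using bd_un[OF bl ne bd_img[OF bl bd_img[OF bl bd_single[OF bl w0X] E] E] bd_img[OF bl Z E]] .
    define M where "M = E `` (M1 \<union> {b0})"
    have M: "?bd M" unfolding M_def using bd_img[OF bl bd_un[OF bl ne M1 bd_single[OF bl b0X]] E] .
    have "\<Union>(?H E `` LW \<inter> ?H E `` LB) \<subseteq> M"
    proof
      fix k assume "k \<in> \<Union>(?H E `` LW \<inter> ?H E `` LB)"
      then obtain K where K: "K \<in> ?H E `` LW" "K \<in> ?H E `` LB" "k \<in> K" by blast
      obtain L1 where L1: "L1 \<in> LW" "(L1, K) \<in> ?H E" using K(1) by (rule ImageE)
      obtain w where "w \<in> W" "L1 = {w,b0}" using L1(1) unfolding LW_def by blast
      then have w: "w \<in> W" "({w,b0}, K) \<in> ?H E" using L1(2) by simp_all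
      obtain L2 where L2: "L2 \<in> LB" "(L2, K) \<in> ?H E" using K(2) by (rule ImageE)
      obtain b where "b \<in> B" "L2 = {w0,b}" using L2(1) unfolding LB_def by blast
      then have b: "b \<in> B" "({w0,b}, K) \<in> ?H E" using L2(2) by simp_all
      have h1: "{w,b0} \<subseteq> E `` K" "K \<subseteq> E `` {w,b0}" using w(2) unfolding hyp_mem by blast+
      have h2: "K \<subseteq> E `` {w0,b}" using b(2) unfolding hyp_mem by blast
      obtain k1 where k1: "k1 \<in> K" "(k1, w) \<in> E" using h1(1) by blast
      have "w \<in> M1"
      proof (cases "(w0, k1) \<in> E")
        case True then show ?thesis unfolding M1_def using k1 by blast
      next
        case False
        then have "(b, k1) \<in> E" using h2 k1(1) by blast
        then have "k1 \<in> D `` B" using b(1) D by blast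
        moreover have "(w, k1) \<in> D" using k1(2) E1 D by blast
        then have "k1 \<in> D `` W" using w(1) by blast
        ultimately have "k1 \<in> Z" unfolding Z_def by blast
        then show ?thesis unfolding M1_def using k1(2) by blast
      qed
      then show "k \<in> M" unfolding M_def using h1(2) K(3) by blast
    qed
    then have "?bd (\<Union>(?H E `` LW \<inter> ?H E `` LB))" using M by (meson bd_mono)
    moreover have "?H E `` LW \<inter> ?H E `` LB \<subseteq> ?C" using hyp_img_car by blast
    ultimately show "bounded_set ?C (hyp2_entourages X EE) (HE `` LW \<inter> HE `` LB)"
      using hyp_bd_of[OF bl ne] HE by simp
  qed
  obtain UU VV where UV: "UU \<subseteq> ?C" "VV \<subseteq> ?C" "asymp_nbhd ?C (hyp2_entourages X EE) UU LW"
    "asymp_nbhd ?C (hyp2_entourages X EE) VV LB" "UU \<inter> VV = {}"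
    using nm[unfolded normal_ballean_def, rule_format, OF LWc LBc disj] by blast
  have nbU: "?bd (\<Union>(?H E `` LW - UU))" if "E \<in> EE" for E
  proof -
    have "?H E \<in> hyp2_entourages X EE" unfolding hyp2_entourages_def using that by blast
    then have "bounded_set ?C (hyp2_entourages X EE) (?H E `` LW - UU)"
      using UV(3) unfolding asymp_nbhd_def by blast
    then show ?thesis by (rule hyp_bd_union[OF bl])
  qed
  have nbV: "?bd (\<Union>(?H E `` LB - VV))" if "E \<in> EE" for E
  proof -
    have "?H E \<in> hyp2_entourages X EE" unfolding hyp2_entourages_def using that by blast
    then have "bounded_set ?C (hyp2_entourages X EE) (?H E `` LB - VV)"
      using UV(4) unfolding asymp_nbhd_def by blast
    then show ?thesis by (rule hyp_bd_union[OF bl])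
  qed
  have aex: "\<exists>M. ?bd M \<and> (\<forall>w\<in>W. w \<notin> M \<longrightarrow> (\<forall>c\<in>C. {w,c} \<in> UU))" if C: "?bd C" "C \<subseteq> B" for C
  proof -
    obtain E where E: "E \<in> EE" "C \<times> {b0} \<subseteq> E" "{b0} \<times> C \<subseteq> E" using bd_cross[OF bl C(1) b0X] by blast
    have "\<forall>w\<in>W. w \<notin> \<Union>(?H E `` LW - UU) \<longrightarrow> (\<forall>c\<in>C. {w,c} \<in> UU)"
    proof (intro ballI impI)
      fix w c assume w: "w \<in> W" and nw: "w \<notin> \<Union>(?H E `` LW - UU)" and c: "c \<in> C"
      have wX: "w \<in> X" using w WX by blast
      have cX: "c \<in> X" using c C(2) BX by blast
      have ww: "(w,w) \<in> E" using bl_id[OF bl E(1) wX] .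
      have "({w,b0}, {w,c}) \<in> ?H E" unfolding hyp_mem
      proof (intro conjI)
        show "{w,b0} \<in> ?C" using car_pair[OF bl wX b0X] .
        show "{w,c} \<in> ?C" using car_pair[OF bl wX cX] .
        show "{w,b0} \<subseteq> E `` {w,c}" using ww E(2) c by blast
        show "{w,c} \<subseteq> E `` {w,b0}" using ww E(3) c by blast
      qed
      moreover have "{w,b0} \<in> LW" unfolding LW_def using w by blast
      ultimately have m: "{w,c} \<in> ?H E `` LW" by (rule ImageI)
      show "{w,c} \<in> UU"
      proof (rule ccontr)
        assume "{w,c} \<notin> UU"
        then have "{w,c} \<in> ?H E `` LW - UU" using m by blast
        then have "w \<in> \<Union>(?H E `` LW - UU)" by blast
        then show False using nw by blast
      qed
    qed
    then show ?thesis using nbU[OF E(1)] by blast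
  qed
  have bex: "\<exists>M. ?bd M \<and> (\<forall>b\<in>B. b \<notin> M \<longrightarrow> (\<forall>c\<in>C. {c,b} \<in> VV))" if C: "?bd C" "C \<subseteq> W" for C
  proof -
    obtain E where E: "E \<in> EE" "C \<times> {w0} \<subseteq> E" "{w0} \<times> C \<subseteq> E" using bd_cross[OF bl C(1) w0X] by blast
    have "\<forall>b\<in>B. b \<notin> \<Union>(?H E `` LB - VV) \<longrightarrow> (\<forall>c\<in>C. {c,b} \<in> VV)"
    proof (intro ballI impI)
      fix b c assume b: "b \<in> B" and nb: "b \<notin> \<Union>(?H E `` LB - VV)" and c: "c \<in> C"
      have bX: "b \<in> X" using b BX by blast
      have cX: "c \<in> X" using c C(2) WX by blast
      have bb: "(b,b) \<in> E" using bl_id[OF bl E(1) bX] .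
      have "({w0,b}, {c,b}) \<in> ?H E" unfolding hyp_mem
      proof (intro conjI)
        show "{w0,b} \<in> ?C" using car_pair[OF bl w0X bX] .
        show "{c,b} \<in> ?C" using car_pair[OF bl cX bX] .
        show "{w0,b} \<subseteq> E `` {c,b}" using bb E(2) c by blast
        show "{c,b} \<subseteq> E `` {w0,b}" using bb E(3) c by blast
      qed
      moreover have "{w0,b} \<in> LB" unfolding LB_def using b by blast
      ultimately have m: "{c,b} \<in> ?H E `` LB" by (rule ImageI)
      show "{c,b} \<in> VV"
      proof (rule ccontr)
        assume "{c,b} \<notin> VV"
        then have "{c,b} \<in> ?H E `` LB - VV" using m by blast
        then have "b \<in> \<Union>(?H E `` LB - VV)" by blast
        then show False using nb by blast
      qed
    qed
    then show ?thesis using nbV[OF E(1)] by blast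
  qed
  define \<alpha> where "\<alpha> C = (SOME M. ?bd M \<and> (\<forall>w\<in>W. w \<notin> M \<longrightarrow> (\<forall>c\<in>C. {w,c} \<in> UU)))" for C
  define \<beta> where "\<beta> C = (SOME M. ?bd M \<and> (\<forall>b\<in>B. b \<notin> M \<longrightarrow> (\<forall>c\<in>C. {c,b} \<in> VV)))" for C
  have \<alpha>: "?bd (\<alpha> C) \<and> (\<forall>w\<in>W. w \<notin> \<alpha> C \<longrightarrow> (\<forall>c\<in>C. {w,c} \<in> UU))" if "?bd C" "C \<subseteq> B" for C
    unfolding \<alpha>_def using someI_ex[OF aex[OF that]] .
  have \<beta>: "?bd (\<beta> C) \<and> (\<forall>b\<in>B. b \<notin> \<beta> C \<longrightarrow> (\<forall>c\<in>C. {c,b} \<in> VV))" if "?bd C" "C \<subseteq> W" for C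
    unfolding \<beta>_def using someI_ex[OF bex[OF that]] .
  have dich: "C' \<subseteq> \<alpha> C \<or> C \<subseteq> \<beta> C'" if "?bd C" "C \<subseteq> B" "?bd C'" "C' \<subseteq> W" for C C'
  proof (rule ccontr)
    assume "\<not> (C' \<subseteq> \<alpha> C \<or> C \<subseteq> \<beta> C')"
    then obtain w b where wb: "w \<in> C'" "w \<notin> \<alpha> C" "b \<in> C" "b \<notin> \<beta> C'" by blast
    have "{w,b} \<in> UU" using \<alpha>[OF that(1,2)] wb that(4) by blast
    moreover have "{w,b} \<in> VV" using \<beta>[OF that(3,4)] wb that(2) by blast
    ultimately show False using UV(5) by blast
  qed
  have sing: "?bd {x}" if "x \<in> W \<union> B" for x using bd_single[OF bl] that WX BX by blast
  have small: "?bd (\<Union>FF)" if "cofam ?bd CC" "\<forall>C'. cofam ?bd C' \<longrightarrow> (card_of CC, card_of C') \<in> ordLeq"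
    "FF \<subseteq> CC" "(card_of FF, card_of CC) \<in> ordLess" for CC FF
  proof (rule key_small[where bd = ?bd and G = G' and W = W and B = B and \<alpha> = \<alpha> and \<beta> = \<beta>])
    show "\<And>S T. T \<subseteq> S \<Longrightarrow> ?bd S \<Longrightarrow> ?bd T" by (rule bd_mono)
    show "\<And>S T. ?bd S \<Longrightarrow> ?bd T \<Longrightarrow> ?bd (S \<union> T)" by (rule bd_un[OF bl ne])
    show "\<And>x. x \<in> W \<union> B \<Longrightarrow> ?bd {x}" by (rule sing)
    show "\<And>S. ?bd S \<Longrightarrow> ?bd (G' `` S)" by (rule G'im)
    show "\<not> ?bd W" by (rule nW)
    show "\<not> ?bd B" by (rule nB)
    show "\<And>S. ?bd S \<Longrightarrow> S \<subseteq> S \<inter> W \<union> G' `` (G' `` S \<inter> B)" by (rule cover)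
    show "\<And>C. ?bd C \<Longrightarrow> C \<subseteq> B \<Longrightarrow> ?bd (\<alpha> C)" using \<alpha> by blast
    show "\<And>C. ?bd C \<Longrightarrow> C \<subseteq> W \<Longrightarrow> ?bd (\<beta> C)" using \<beta> by blast
    show "\<And>C C'. ?bd C \<Longrightarrow> C \<subseteq> B \<Longrightarrow> ?bd C' \<Longrightarrow> C' \<subseteq> W \<Longrightarrow> C' \<subseteq> \<alpha> C \<or> C \<subseteq> \<beta> C'"
      by (rule dich)
  qed (use that in auto)
  have c0: "cofam ?bd (Collect ?bd)" unfolding cofam_def by blast
  have "\<exists>L. (\<forall>A\<in>L. ?bd A) \<and> (\<forall>A\<in>L. \<forall>B\<in>L. A \<subseteq> B \<or> B \<subseteq> A) \<and> (\<forall>B. ?bd B \<longrightarrow> (\<exists>A\<in>L. B \<subseteq> A))"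
    by (rule chain_lemma[OF bd_un[OF bl ne] c0 small])
  then show ?thesis unfolding has_linear_bornology_base_def .
qed

theorem theorem1p11:
  fixes X :: "'a set" and EE :: "('a \<times> 'a) set set"
  assumes "ballean X EE" and "X \<noteq> {}"
    and "normal_ballean (hyp2_carrier X EE) (hyp2_entourages X EE)"
  shows "bounded_growth X EE \<and> (ultranormal X EE \<or> has_linear_bornology_base X EE)"
proof -
  obtain G where G: "G \<subseteq> X \<times> X" "sym G" "\<forall>S. bounded_set X EE S \<longrightarrow> bounded_set X EE (G `` S)"
    "\<forall>E\<in>EE. \<exists>K. bounded_set X EE K \<and> (\<forall>x\<in>X - K. E `` {x} \<subseteq> G `` {x})"
    using part1[OF assms] by blast
  have "bounded_growth X EE" unfolding bounded_growth_def using G(1,3,4) by blast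
  moreover have "ultranormal X EE \<or> has_linear_bornology_base X EE"
  proof (cases "ultranormal X EE")
    case True then show ?thesis by blast
  next
    case False
    then obtain A B where AB: "A \<subseteq> X" "B \<subseteq> X" "\<not> bounded_set X EE A" "\<not> bounded_set X EE B"
      "asymp_disjoint X EE A B" unfolding ultranormal_def by blast
    show ?thesis using part2[OF assms G AB] by blast
  qed
  ultimately show ?thesis by blast
qed

end
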